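(* Let $X$ be a finite set and let $\tau\subseteq\binom{X}{2}$ be non-empty with $L(\tau)=X$. Then $\tau$ is thin (i.e. $|L(\tau')|\ge|\tau'|+1$ for every non-empty $\tau'\subseteq\tau$) if and only if the bipartite graph $G(\tau)$ is a forest.
   Context: $L(\tau)=\bigcup_{s\in\tau}s$. $G(\tau)$ is the bipartite graph with vertex set $\tau\cup L(\tau)$ (the two sides) in which $t\in\tau$ and $x\in L(\tau)$ are adjacent if and only if $x\in t$. *)

theory Defs
  imports Main
begin

definition L :: "'a set set \<Rightarrow> 'a set" where
  "L \<tau> = \<Union>\<tau>"

definition thin :: "'a set set \<Rightarrow> bool" where
  "thin \<tau> \<longleftrightarrow> (\<forall>\<tau>'. \<tau>' \<subseteq> \<tau> \<and> \<tau>' \<noteq> {} \<longrightarrow> card (L \<tau>') \<ge> card \<tau>' + 1)"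

definition G_adj :: "'a set set \<Rightarrow> ('a set + 'a) \<Rightarrow> ('a set + 'a) \<Rightarrow> bool" where
  "G_adj \<tau> u v \<longleftrightarrow> (\<exists>t x. t \<in> \<tau> \<and> x \<in> t \<and>
      ((u = Inl t \<and> v = Inr x) \<or> (u = Inr x \<and> v = Inl t)))"

definition has_cycle :: "('v \<Rightarrow> 'v \<Rightarrow> bool) \<Rightarrow> bool" where
  "has_cycle adj \<longleftrightarrow> (\<exists>vs. length vs \<ge> 3 \<and> distinct vs \<and>
      (\<forall>i < length vs. adj (vs ! i) (vs ! ((i + 1) mod length vs))))"

definition is_forest :: "('v \<Rightarrow> 'v \<Rightarrow> bool) \<Rightarrow> bool" where
  "is_forest adj \<longleftrightarrow> \<not> has_cycle adj"

end

theory Submission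
  imports Defs
begin

lemma card2_other:
  assumes "card e = 2" "x \<in> e"
  shows "\<exists>y. y \<noteq> x \<and> e = {x, y}"
  using assms unfolding card_2_iff by auto

lemma card2_eq:
  assumes "card e = 2" "a \<in> e" "b \<in> e" "a \<noteq> b"
  shows "e = {a, b}"
  using assms unfolding card_2_iff by auto

lemma mod_helper:
  fixes i j n :: nat
  assumes "n \<ge> 3" "i < n" "j < n" "i = (j+1) mod n" "j = (i+1) mod n"
  shows False
proof (cases "j + 1 < n")
  case True
  then have i: "i = j+1" using assms(4) by simp
  have "j = (j+2) mod n" using assms(5) unfolding i by simp
  moreover have "j + 2 \<le> n" using True by simp
  ultimately show False using assms(1)
    by (cases "j + 2 = n") auto
next
  case False
  then have jn: "j + 1 = n" using assms(3) by simp
  then have "i = 0" using assms(4) by simp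
  then have "j = 1 mod n" using assms(5) by simp
  then show False using jn assms(1) by simp
qed

definition deg2 :: "'a set set \<Rightarrow> bool" where
  "deg2 E \<longleftrightarrow> (\<forall>x\<in>\<Union>E. \<exists>e1\<in>E. \<exists>e2\<in>E. e1 \<noteq> e2 \<and> x \<in> e1 \<and> x \<in> e2)"

lemma lemA:
  assumes two: "\<forall>e\<in>E. card e = 2" and ne: "E \<noteq> {}" and deg: "deg2 E"
    and finU: "finite (\<Union>E)"
  shows "\<exists>cs. length cs \<ge> 3 \<and> distinct cs \<and>
     (\<forall>i<length cs. {cs!i, cs!((i+1) mod length cs)} \<in> E)"
proof -
  define P where "P = {xs. distinct xs \<and> set xs \<subseteq> \<Union>E \<and>
      (\<forall>i. Suc i < length xs \<longrightarrow> {xs!i, xs!Suc i} \<in> E)}"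
  have finP: "finite P"
    by (rule finite_subset[OF _ finite_subset_distinct[OF finU]]) (auto simp: P_def)
  obtain e where e: "e \<in> E" using ne by auto
  then obtain a b where ab: "e = {a,b}" "a \<noteq> b" using two card_2_iff by metis
  have abP: "[a,b] \<in> P" using ab e unfolding P_def by auto
  define m where "m = Max (length ` P)"
  have "m \<in> length ` P" unfolding m_def using finP abP by (intro Max_in) auto
  then obtain xs where xs: "xs \<in> P" "length xs = m" by auto
  have maxl: "\<And>ys. ys \<in> P \<Longrightarrow> length ys \<le> length xs"
    using xs finP unfolding m_def by auto
  have l2: "length xs \<ge> 2" using maxl[OF abP] by simp
  have dxs: "distinct xs" and sxs: "set xs \<subseteq> \<Union>E"
    and pxs: "\<And>i. Suc i < length xs \<Longrightarrow> {xs!i, xs!Suc i} \<in> E"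
    using xs(1) unfolding P_def by auto
  define x where "x = xs!0"
  have "x \<in> set xs" using l2 unfolding x_def by (intro nth_mem) linarith
  then have "x \<in> \<Union>E" using sxs by blast
  then obtain e1 e2 where e12: "e1 \<in> E" "e2 \<in> E" "e1 \<noteq> e2" "x \<in> e1" "x \<in> e2"
    using deg unfolding deg2_def by blast
  obtain a1 where a1: "a1 \<noteq> x" "e1 = {x,a1}" using card2_other two e12 by metis
  obtain a2 where a2: "a2 \<noteq> x" "e2 = {x,a2}" using card2_other two e12 by metis
  have "a1 \<noteq> a2" using a1 a2 e12 by auto
  then obtain y where y: "y \<noteq> x" "y \<noteq> xs!1" "{x,y} \<in> E"
    using a1 a2 e12 by metis
  have "y \<in> set xs"
  proof (rule ccontr)
    assume yn: "y \<notin> set xs"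
    have "y # xs \<in> P"
      unfolding P_def
    proof (intro CollectI conjI allI impI)
      show "distinct (y # xs)" using yn dxs by simp
      show "set (y # xs) \<subseteq> \<Union>E" using sxs y(3) by auto
      fix i assume i: "Suc i < length (y # xs)"
      show "{(y # xs) ! i, (y # xs) ! Suc i} \<in> E"
      proof (cases i)
        case 0
        then show ?thesis using y(3) unfolding x_def by (simp add: insert_commute)
      next
        case (Suc k)
        then show ?thesis using pxs i by simp
      qed
    qed
    then show False using maxl by fastforce
  qed
  then obtain j where j: "j < length xs" "xs!j = y" by (auto simp: in_set_conv_nth)
  have j0: "j \<noteq> 0" using j y unfolding x_def by (metis)
  have j1: "j \<noteq> 1" using j y by (metis One_nat_def)
  define cs where "cs = take (Suc j) xs"
  have lcs: "length cs = Suc j" using j unfolding cs_def by simp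
  show ?thesis
  proof (intro exI conjI allI impI)
    show "length cs \<ge> 3" using lcs j0 j1 by simp
    show "distinct cs" using dxs unfolding cs_def by simp
    fix i assume i: "i < length cs"
    show "{cs ! i, cs ! ((i + 1) mod length cs)} \<in> E"
    proof (cases "i < j")
      case True
      then have "(i+1) mod length cs = Suc i" using lcs by simp
      then show ?thesis using True pxs j unfolding cs_def by simp
    next
      case False
      then have "i = j" using i lcs by simp
      then show ?thesis using y j lcs unfolding cs_def x_def
        by (simp add: insert_commute)
    qed
  qed
qed

lemma lemB:
  assumes fin: "finite \<tau>" and two: "\<forall>e\<in>\<tau>. card e = 2"
  shows "E \<subseteq> \<tau> \<Longrightarrow> E \<noteq> {} \<Longrightarrow> card (\<Union>E) \<le> card E \<Longrightarrow>
    \<exists>E'. E' \<subseteq> \<tau> \<and> E' \<noteq> {} \<and> deg2 E'"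
proof (induction "card E" arbitrary: E rule: less_induct)
  case less
  show ?case
  proof (cases "deg2 E")
    case True
    then show ?thesis using less by blast
  next
    case False
    then obtain x where x: "x \<in> \<Union>E"
      and nd: "\<not> (\<exists>e1\<in>E. \<exists>e2\<in>E. e1 \<noteq> e2 \<and> x \<in> e1 \<and> x \<in> e2)"
      unfolding deg2_def by blast
    then obtain e where e: "e \<in> E" "x \<in> e" by blast
    have uniq: "\<And>e'. e' \<in> E \<Longrightarrow> x \<in> e' \<Longrightarrow> e' = e" using nd e by blast
    define E' where "E' = E - {e}"
    have finE: "finite E" using less.prems fin finite_subset by blast
    have fine: "\<And>e. e \<in> E \<Longrightarrow> finite e"
      using two less.prems by (metis card.infinite subsetD zero_neq_numeral)
    have finU: "finite (\<Union>E)" using finE fine by blast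
    have sub: "\<Union>E' \<subseteq> \<Union>E - {x}" unfolding E'_def using uniq by blast
    have c1: "card (\<Union>E') \<le> card (\<Union>E) - 1"
    proof -
      have "card (\<Union>E') \<le> card (\<Union>E - {x})" using sub finU by (intro card_mono) auto
      also have "\<dots> = card (\<Union>E) - 1" using x finU by simp
      finally show ?thesis .
    qed
    have c2: "card E' = card E - 1" unfolding E'_def using e finE by simp
    have ne': "E' \<noteq> {}"
    proof
      assume "E' = {}"
      then have "E = {e}" using e unfolding E'_def by blast
      then show False using less.prems two e by auto
    qed
    have "card E' < card E" unfolding E'_def using e finE by (meson card_Diff1_less)
    moreover have "card (\<Union>E') \<le> card E'" using c1 c2 less.prems(3) by linarith
    moreover have "E' \<subseteq> \<tau>" using less.prems unfolding E'_def by blast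
    ultimately show ?thesis using less.hyps ne' by blast
  qed
qed

lemma lemC:
  assumes n3: "length cs \<ge> 3" and dc: "distinct cs"
    and edges: "\<forall>i<length cs. {cs!i, cs!((i+1) mod length cs)} \<in> \<tau>"
  shows "has_cycle (G_adj \<tau>)"
proof -
  define n where "n = length cs"
  define sc where "sc i = (i+1) mod n" for i
  define f where "f k = (if even k then Inr (cs!(k div 2))
      else Inl {cs!(k div 2), cs!(sc (k div 2))})" for k
  define vs where "vs = map f [0..<2*n]"
  have lvs: "length vs = 2*n" unfolding vs_def by simp
  have vsk: "\<And>k. k < 2*n \<Longrightarrow> vs!k = f k" unfolding vs_def by simp
  have n3': "n \<ge> 3" using n3 n_def by simp
  have scn: "\<And>i. sc i < n" unfolding sc_def n_def using n3 by (intro mod_less_divisor) linarith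
  have inj: "inj_on f {0..<2*n}"
  proof (rule inj_onI)
    fix k l assume k: "k \<in> {0..<2*n}" and l: "l \<in> {0..<2*n}" and fe: "f k = f l"
    have kd: "k div 2 < n" and ld: "l div 2 < n" using k l by auto
    have eqi: "\<And>a b. a < n \<Longrightarrow> b < n \<Longrightarrow> cs!a = cs!b \<longleftrightarrow> a = b"
      using nth_eq_iff_index_eq[OF dc] unfolding n_def by blast
    show "k = l"
    proof (cases "even k")
      case ek: True
      show ?thesis
      proof (cases "even l")
        case True
        then have "cs!(k div 2) = cs!(l div 2)" using ek fe unfolding f_def by simp
        then have "k div 2 = l div 2" using eqi kd ld by blast
        then show ?thesis using ek True by presburger
      next
        case False
        then show ?thesis using ek fe unfolding f_def by simp
      qed
    next
      case ok: False
      show ?thesis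
      proof (cases "even l")
        case True
        then show ?thesis using ok fe unfolding f_def by simp
      next
        case ol: False
        define i where "i = k div 2"
        define j where "j = l div 2"
        have "{cs!i, cs!(sc i)} = {cs!j, cs!(sc j)}"
          using ok ol fe unfolding f_def i_def j_def by simp
        then have "(cs!i = cs!j \<and> cs!(sc i) = cs!(sc j)) \<or> (cs!i = cs!(sc j) \<and> cs!(sc i) = cs!j)"
          by (simp add: doubleton_eq_iff)
        moreover have ij: "i < n" "j < n" using kd ld i_def j_def by auto
        ultimately have "i = j \<or> (i = sc j \<and> sc i = j)"
          using eqi scn by blast
        moreover have "\<not> (i = sc j \<and> sc i = j)"
        proof
          assume h: "i = sc j \<and> sc i = j"
          show False using mod_helper[OF n3' ij] h unfolding sc_def by (metis (no_types))
        qed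
        ultimately have "i = j" by blast
        then show ?thesis using ok ol unfolding i_def j_def by presburger
      qed
    qed
  qed
  have dvs: "distinct vs" unfolding vs_def using inj by (simp add: distinct_map)
  have adj: "\<And>k. k < 2*n \<Longrightarrow> G_adj \<tau> (f k) (f ((k+1) mod (2*n)))"
  proof -
    fix k assume k: "k < 2*n"
    define i where "i = k div 2"
    have i: "i < n" using k i_def by auto
    have ed: "{cs!i, cs!(sc i)} \<in> \<tau>" using edges i unfolding sc_def n_def by simp
    show "G_adj \<tau> (f k) (f ((k+1) mod (2*n)))"
    proof (cases "even k")
      case True
      then have "k + 1 < 2*n" using k by presburger
      then have "(k+1) mod (2*n) = k+1" by simp
      moreover have "(k+1) div 2 = i" using True i_def by presburger
      ultimately show ?thesis using True ed unfolding f_def G_adj_def i_def by auto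
    next
      case False
      have k2: "k = 2*i+1" using False i_def by presburger
      have m: "((k+1) mod (2*n)) div 2 = sc i \<and> even ((k+1) mod (2*n))"
      proof (cases "i + 1 < n")
        case True
        then have "(k+1) mod (2*n) = 2*(i+1)" using k2 by simp
        then show ?thesis unfolding sc_def using True by simp
      next
        case False
        then have "i + 1 = n" using i by simp
        then have "k+1 = 2*n" using k2 by simp
        then have "(k+1) mod (2*n) = 0" by simp
        then show ?thesis unfolding sc_def using \<open>i+1 = n\<close> by simp
      qed
      have "f ((k+1) mod (2*n)) = Inr (cs!(sc i))" using m unfolding f_def by simp
      moreover have "f k = Inl {cs!i, cs!(sc i)}" using False unfolding f_def i_def by simp
      ultimately show ?thesis using ed unfolding G_adj_def by blast
    qed
  qed
  show ?thesis unfolding has_cycle_def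
  proof (intro exI conjI allI impI)
    show "3 \<le> length vs" using lvs n3 n_def by simp
    show "distinct vs" by (rule dvs)
    fix k assume k: "k < length vs"
    have pos: "0 < length vs" using lvs n3' by simp
    have "(k+1) mod length vs < 2*n" using mod_less_divisor[OF pos] lvs by simp
    then show "G_adj \<tau> (vs ! k) (vs ! ((k + 1) mod length vs))"
      using adj[of k] k lvs vsk by simp
  qed
qed

lemma sc_inj:
  fixes a b n :: nat
  assumes "a < n" "b < n" "(a+1) mod n = (b+1) mod n"
  shows "a = b"
proof (cases "a + 1 < n")
  case True
  show ?thesis
  proof (cases "b + 1 < n")
    case True
    then show ?thesis using assms \<open>a+1<n\<close> by simp
  next
    case False
    then have "b + 1 = n" using assms by simp
    then show ?thesis using assms True by simp
  qed
next
  case False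
  then have an: "a + 1 = n" using assms by simp
  show ?thesis
  proof (cases "b + 1 < n")
    case True
    then show ?thesis using assms an by simp
  next
    case False
    then show ?thesis using assms an by simp
  qed
qed

lemma prl: "(i::nat) \<noteq> 0 \<Longrightarrow> i < n \<Longrightarrow> (i + n - 1) mod n = i - 1"
proof -
  assume a: "i \<noteq> 0" "i < n"
  have "i + n - 1 = (i - 1) + n" using a by simp
  then have "(i + n - 1) mod n = ((i - 1) + n) mod n" by (rule arg_cong)
  also have "\<dots> = i - 1" using a by (subst mod_add_self2) simp
  finally show ?thesis .
qed

lemma pr0: "(n::nat) \<ge> 3 \<Longrightarrow> (0 + n - 1) mod n = n - 1" by simp

lemma sc_last: "(n::nat) \<ge> 3 \<Longrightarrow> (n - 1 + 1) mod n = 0" by simp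

lemma lemD:
  assumes two: "\<forall>e\<in>\<tau>. card e = 2" and hc: "has_cycle (G_adj \<tau>)"
  shows "\<exists>\<tau>'. \<tau>' \<subseteq> \<tau> \<and> \<tau>' \<noteq> {} \<and> card (\<Union>\<tau>') \<le> card \<tau>'"
proof -
  obtain vs where n3: "length vs \<ge> 3" and dvs: "distinct vs"
    and adj: "\<forall>i < length vs. G_adj \<tau> (vs ! i) (vs ! ((i + 1) mod length vs))"
    using hc unfolding has_cycle_def by blast
  define n where "n = length vs"
  have n3': "n \<ge> 3" using n3 n_def by simp
  define sc where "sc i = (i+1) mod n" for i
  define pr where "pr i = (i + n - 1) mod n" for i
  have scn: "\<And>i. sc i < n" unfolding sc_def using n3' by simp
  have prn: "\<And>i. pr i < n" unfolding pr_def using n3' by simp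
  have scpr: "sc (pr i) = i" if i: "i < n" for i
  proof (cases "i = 0")
    case True
    have "pr i = n - 1" unfolding pr_def True using pr0[OF n3'] .
    then show ?thesis unfolding sc_def True using sc_last[OF n3'] by simp
  next
    case False
    have "pr i = i - 1" unfolding pr_def using prl[OF False i] .
    moreover have "i - 1 + 1 = i" using False by simp
    ultimately show ?thesis unfolding sc_def using i by simp
  qed
  have scne: "sc i \<noteq> pr i" if i: "i < n" for i
  proof (cases "i = 0")
    case True
    have "pr i = n - 1" unfolding pr_def True using pr0[OF n3'] .
    moreover have "sc i = 1" unfolding sc_def True using n3' by simp
    ultimately show ?thesis using n3' by simp
  next
    case False
    have p: "pr i = i - 1" unfolding pr_def using prl[OF False i] .
    show ?thesis
    proof (cases "i + 1 < n")
      case True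
      then have "sc i = i + 1" unfolding sc_def by simp
      then show ?thesis using p False by simp
    next
      case F2: False
      then have "i + 1 = n" using i by simp
      then have "sc i = 0" unfolding sc_def by simp
      then show ?thesis using p F2 False i n3' by simp
    qed
  qed
  have adj': "\<And>i. i < n \<Longrightarrow> G_adj \<tau> (vs ! i) (vs ! (sc i))"
    using adj unfolding sc_def n_def by simp
  have adjp: "G_adj \<tau> (vs ! (pr i)) (vs ! i)" if i: "i < n" for i
    using adj'[OF prn[of i]] scpr[OF i] by simp
  have eqi: "\<And>a b. a < n \<Longrightarrow> b < n \<Longrightarrow> vs!a = vs!b \<longleftrightarrow> a = b"
    using nth_eq_iff_index_eq[OF dvs] unfolding n_def by blast
  define T where "T = {t. Inl t \<in> set vs}"
  define Y where "Y = {x. Inr x \<in> set vs}"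
  define I where "I = {i. i < n \<and> (\<exists>x. vs!i = Inr x)}"
  define J where "J = {i. i < n \<and> (\<exists>t. vs!i = Inl t)}"
  have Tsub: "T \<subseteq> \<tau>"
  proof
    fix t assume "t \<in> T"
    then obtain i where i: "i < n" "vs!i = Inl t" unfolding T_def n_def by (auto simp: in_set_conv_nth)
    then show "t \<in> \<tau>" using adj'[OF i(1)] unfolding G_adj_def by auto
  qed
  have Tne: "T \<noteq> {}"
  proof (cases "vs!0")
    case (Inl t)
    have "vs!0 \<in> set vs" using n3 by (intro nth_mem) linarith
    then have "t \<in> T" unfolding T_def using Inl by simp
    then show ?thesis by blast
  next
    case (Inr x)
    have "0 < n" using n3' by simp
    then have "G_adj \<tau> (vs!0) (vs!(sc 0))" using adj' by blast
    then obtain t where "vs!(sc 0) = Inl t" using Inr unfolding G_adj_def by auto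
    moreover have "vs!(sc 0) \<in> set vs" using scn[of 0] n_def by (intro nth_mem) simp
    ultimately have "t \<in> T" unfolding T_def by simp
    then show ?thesis by blast
  qed
  have LY: "\<Union>T \<subseteq> Y"
  proof
    fix x assume "x \<in> \<Union>T"
    then obtain t where t: "t \<in> T" "x \<in> t" by blast
    then obtain i where i: "i < n" "vs!i = Inl t" unfolding T_def n_def by (auto simp: in_set_conv_nth)
    obtain a where a: "vs!(sc i) = Inr a" "a \<in> t" using adj'[OF i(1)] i(2) unfolding G_adj_def by auto
    obtain b where b: "vs!(pr i) = Inr b" "b \<in> t" using adjp[OF i(1)] i(2) unfolding G_adj_def by auto
    have "vs!(sc i) \<noteq> vs!(pr i)" using eqi[OF scn prn, of i i] scne[OF i(1)] by blast
    then have "a \<noteq> b" using a(1) b(1) by auto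
    moreover have "card t = 2" using two Tsub t(1) by blast
    ultimately have "t = {a, b}" using card2_eq[of t a b] a(2) b(2) by blast
    moreover have "vs!(sc i) \<in> set vs" "vs!(pr i) \<in> set vs"
      using scn[of i] prn[of i] n_def by (auto intro!: nth_mem)
    moreover have "a \<in> Y" "b \<in> Y" unfolding Y_def using a b calculation(2,3) by simp_all
    ultimately show "x \<in> Y" using t by blast
  qed
  have finY: "finite Y"
  proof -
    have "Y \<subseteq> projr ` set vs" unfolding Y_def by force
    then show ?thesis by (rule finite_subset) simp
  qed
  have c1: "card (\<Union>T) \<le> card Y" using LY finY by (rule card_mono[rotated])
  have c2: "card Y \<le> card I"
  proof -
    have "Y \<subseteq> (\<lambda>i. projr (vs!i)) ` I"
    proof
      fix x assume "x \<in> Y"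
      then obtain i where "i < n" "vs!i = Inr x" unfolding Y_def n_def by (auto simp: in_set_conv_nth)
      then show "x \<in> (\<lambda>i. projr (vs!i)) ` I" unfolding I_def by force
    qed
    moreover have "finite I" unfolding I_def by simp
    ultimately show ?thesis by (meson card_image_le card_mono finite_imageI le_trans)
  qed
  have c3: "card I \<le> card J"
  proof (rule card_inj_on_le)
    show "inj_on sc I"
    proof (rule inj_onI)
      fix a b assume "a \<in> I" "b \<in> I" "sc a = sc b"
      then show "a = b" unfolding I_def sc_def using sc_inj by blast
    qed
    show "sc ` I \<subseteq> J"
    proof
      fix j assume "j \<in> sc ` I"
      then obtain i x where i: "i < n" "vs!i = Inr x" "j = sc i" unfolding I_def by auto
      then obtain t where "vs!(sc i) = Inl t" using adj'[OF i(1)] unfolding G_adj_def by auto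
      then show "j \<in> J" unfolding J_def using i scn by auto
    qed
    show "finite J" unfolding J_def by simp
  qed
  have c4: "card J \<le> card T"
  proof (rule card_inj_on_le)
    show "inj_on (\<lambda>i. projl (vs!i)) J"
    proof (rule inj_onI)
      fix a b assume a: "a \<in> J" and b: "b \<in> J" and e: "projl (vs!a) = projl (vs!b)"
      then have "vs!a = vs!b" unfolding J_def by auto
      then show "a = b" using eqi a b unfolding J_def by blast
    qed
    show "(\<lambda>i. projl (vs!i)) ` J \<subseteq> T"
      unfolding J_def T_def n_def by (force simp: in_set_conv_nth)
    have "T \<subseteq> projl ` set vs" unfolding T_def by force
    then show "finite T" by (rule finite_subset) simp
  qed
  show ?thesis using Tsub Tne c1 c2 c3 c4 by (intro exI[of _ T]) auto
qed

theorem corollary2: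
  fixes X :: "'a set" and \<tau> :: "'a set set"
  assumes "finite X"
    and "\<tau> \<subseteq> {s. s \<subseteq> X \<and> card s = 2}"
    and "\<tau> \<noteq> {}"
    and "L \<tau> = X"
  shows "thin \<tau> \<longleftrightarrow> is_forest (G_adj \<tau>)"
proof -
  have two: "\<forall>e\<in>\<tau>. card e = 2" using assms(2) by blast
  have "\<tau> \<subseteq> Pow X" using assms(2) by blast
  then have fin: "finite \<tau>" using assms(1) finite_subset by blast
  show ?thesis
  proof
    assume th: "thin \<tau>"
    show "is_forest (G_adj \<tau>)" unfolding is_forest_def
    proof
      assume "has_cycle (G_adj \<tau>)"
      then obtain T where T: "T \<subseteq> \<tau>" "T \<noteq> {}" "card (\<Union>T) \<le> card T"
        using lemD two by blast
      have "card T + 1 \<le> card (L T)"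
        using th T(1,2) unfolding thin_def by blast
      then show False using T(3) unfolding L_def by linarith
    qed
  next
    assume fo: "is_forest (G_adj \<tau>)"
    show "thin \<tau>" unfolding thin_def
    proof (rule ccontr)
      assume "\<not> (\<forall>\<tau>'. \<tau>' \<subseteq> \<tau> \<and> \<tau>' \<noteq> {} \<longrightarrow> card \<tau>' + 1 \<le> card (L \<tau>'))"
      then obtain T where T0: "T \<subseteq> \<tau>" "T \<noteq> {}" "\<not> card T + 1 \<le> card (L T)"
        by blast
      have T3: "card (\<Union>T) \<le> card T" using T0(3) unfolding L_def by linarith
      note T = T0(1,2) T3
      obtain E where E: "E \<subseteq> \<tau>" "E \<noteq> {}" "deg2 E" using lemB[OF fin two T] by blast
      have finU: "finite (\<Union>E)"
      proof -
        have "\<Union>E \<subseteq> X" using E(1) assms(2) by blast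
        then show ?thesis using assms(1) finite_subset by blast
      qed
      obtain cs where "length cs \<ge> 3" "distinct cs"
        "\<forall>i<length cs. {cs!i, cs!((i+1) mod length cs)} \<in> E"
        using lemA[OF _ E(2,3) finU] two E(1) by blast
      then have "has_cycle (G_adj \<tau>)" using lemC[of cs \<tau>] E(1) by blast
      then show False using fo unfolding is_forest_def by blast
    qed
  qed
qed

end
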